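(* Let $\epsilon\in(0,1)$ and $x\in[0,1/2)$, and consider the iterated map $p\mapsto 2p^2(1-\epsilon)^2+4px\epsilon(1-\epsilon)+2x^2\epsilon^2$. For every initial value $p\in[0,1/2]$, the iterates converge to the fixed point $$p^*=\frac{1-4x\epsilon(1-\epsilon)-\sqrt{1-8\epsilon x(1-\epsilon)}}{4(1-\epsilon)^2},$$ and $p^*\le\epsilon$. *)

theory Defs
  imports Complex_Main
begin

definition iter_map :: "real \<Rightarrow> real \<Rightarrow> real \<Rightarrow> real" where
  "iter_map \<epsilon> x p = 2 * p^2 * (1 - \<epsilon>)^2 + 4 * p * x * \<epsilon> * (1 - \<epsilon>) + 2 * x^2 * \<epsilon>^2"

definition fixed_pt :: "real \<Rightarrow> real \<Rightarrow> real" where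
  "fixed_pt \<epsilon> x = (1 - 4 * x * \<epsilon> * (1 - \<epsilon>) - sqrt (1 - 8 * \<epsilon> * x * (1 - \<epsilon>))) / (4 * (1 - \<epsilon>)^2)"

end

theory Submission
  imports Defs
begin

theorem mainTheorem10:
  fixes \<epsilon> x p :: real
  assumes "0 < \<epsilon>" "\<epsilon> < 1" "0 \<le> x" "x < 1/2" "0 \<le> p" "p \<le> 1/2"
  shows "(\<lambda>n. (iter_map \<epsilon> x ^^ n) p) \<longlonglongrightarrow> fixed_pt \<epsilon> x
         \<and> fixed_pt \<epsilon> x \<le> \<epsilon>"
proof -
  define a where "a = 1 - \<epsilon>"
  define b where "b = x * \<epsilon>"
  define f where "f = iter_map \<epsilon> x"
  have a0: "a > 0" "a < 1" using assms by (auto simp: a_def)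
  have b0: "b \<ge> 0" using assms by (simp add: b_def)
  have fq: "\<And>q. f q = 2 * (a*q+b)^2" unfolding f_def iter_map_def a_def b_def
    by (simp add: power2_eq_square algebra_simps)
  have ab: "a*b \<le> x/4"
  proof -
    have "0 \<le> (\<epsilon>-1/2)^2" by simp
    then have "\<epsilon>*(1-\<epsilon>) \<le> 1/4" by (simp add: power2_eq_square algebra_simps)
    then have "x*(\<epsilon>*(1-\<epsilon>)) \<le> x*(1/4)" using assms(3) by (rule mult_left_mono)
    then show ?thesis by (simp add: a_def b_def algebra_simps)
  qed
  define D where "D = 1 - 8*a*b"
  have D0: "D > 0" using ab assms(4) by (simp add: D_def)
  define s where "s = sqrt D"
  have s2: "s^2 = D" using D0 by (simp add: s_def less_imp_le)
  have s0: "s \<ge> 0" using D0 by (simp add: s_def)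
  define pm where "pm = (1 - 4*a*b - s) / (4*a^2)"
  define pp where "pp = (1 - 4*a*b + s) / (4*a^2)"
  have fp: "fixed_pt \<epsilon> x = pm" unfolding fixed_pt_def pm_def s_def D_def a_def b_def
    by (simp add: algebra_simps)
  have a2: "a^2 > 0" using a0 by simp
  have g: "\<And>q. f q - q = 2*a^2*(q - pm)*(q - pp)"
  proof -
    fix q
    have "2*a^2*(q - pm)*(q - pp) = 2*a^2*q^2 - (1-4*a*b)*q + ((1-4*a*b)^2 - s^2)/(8*a^2)"
      unfolding pm_def pp_def using a0 by (simp add: field_simps power2_eq_square)
    also have "((1-4*a*b)^2 - s^2)/(8*a^2) = 2*b^2"
      unfolding s2 D_def using a0 by (simp add: field_simps power2_eq_square)
    finally show "f q - q = 2*a^2*(q - pm)*(q - pp)" unfolding fq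
      by (simp add: power2_eq_square algebra_simps)
  qed
  have pmpp: "pm \<le> pp" unfolding pm_def pp_def using s0 a2 by (simp add: divide_right_mono)
  have neg: "\<And>q. f q < q \<Longrightarrow> pm < q \<and> q < pp"
  proof -
    fix q assume "f q < q"
    then have "2*a^2*((q - pm)*(q - pp)) < 0" using g[of q] by (metis diff_less_0_iff_less mult.assoc)
    then have "(q - pm)*(q - pp) < 0" using a2 by (simp add: mult_less_0_iff)
    then show "pm < q \<and> q < pp" using pmpp by (auto simp: mult_less_0_iff)
  qed
  have half: "f (1/2) < 1/2"
  proof -
    have "x*\<epsilon> < (1/2)*\<epsilon>" using assms by (intro mult_strict_right_mono) auto
    then have "a*(1/2)+b < 1/2" unfolding a_def b_def using left_diff_distrib[of 1 \<epsilon> "1/2::real"] by linarith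
    moreover have "a*(1/2)+b \<ge> 0" using a0 b0 by simp
    ultimately have "(a*(1/2)+b)^2 < (1/2)^2" by (simp add: power_strict_mono)
    then show ?thesis unfolding fq by (simp add: power2_eq_square)
  qed
  from neg[OF half] have pmh: "pm < 1/2" and pph: "1/2 < pp" by auto
  have epsf: "f \<epsilon> < \<epsilon>"
  proof -
    have h1: "a*\<epsilon>+b = \<epsilon>*(1-\<epsilon>+x)" by (simp add: a_def b_def algebra_simps)
    have "1-\<epsilon>+x < 3/2 - \<epsilon>" using assms by simp
    moreover have "0 \<le> 1-\<epsilon>+x" using assms by simp
    ultimately have "(1-\<epsilon>+x)^2 < (3/2-\<epsilon>)^2" by (simp add: power_strict_mono)
    then have "2*\<epsilon>*(1-\<epsilon>+x)^2 < 2*\<epsilon>*(3/2-\<epsilon>)^2" using assms(1) by simp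
    also have "2*\<epsilon>*(3/2-\<epsilon>)^2 \<le> 1"
    proof -
      have "0 \<le> 2*(\<epsilon>-1/2)^2*(2-\<epsilon>)" using assms by simp
      moreover have "2*(\<epsilon>-1/2)^2*(2-\<epsilon>) = 1 - 2*\<epsilon>*(3/2-\<epsilon>)^2" by (simp add: power2_eq_square algebra_simps add_divide_distrib[symmetric])
      ultimately show ?thesis by linarith
    qed
    finally have "2*\<epsilon>*(1-\<epsilon>+x)^2 < 1" .
    then have "\<epsilon> * (2*\<epsilon>*(1-\<epsilon>+x)^2) < \<epsilon>*1" using assms(1) by (rule mult_strict_left_mono)
    then show ?thesis unfolding fq h1 by (simp add: power_mult_distrib power2_eq_square algebra_simps)
  qed
  from neg[OF epsf] have pme: "pm < \<epsilon>" by auto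
  have f0: "f 0 \<ge> 0" by (simp add: fq)
  have pm0: "pm \<ge> 0"
  proof (rule ccontr)
    assume "\<not> pm \<ge> 0"
    then have "0 - pm > 0" "0 - pp < 0" using pph by auto
    then have "(0 - pm)*(0 - pp) < 0" by (simp add: mult_neg_pos)
    then have "2*a^2*(0 - pm)*(0 - pp) < 0" using a2
      by (metis mult.assoc mult_pos_neg zero_less_mult_iff zero_less_numeral)
    then show False using g[of 0] f0 by simp
  qed
  have mono: "\<And>u v. 0 \<le> u \<Longrightarrow> u \<le> v \<Longrightarrow> f u \<le> f v"
  proof -
    fix u v :: real assume "0 \<le> u" "u \<le> v"
    then have "0 \<le> a*u+b" "a*u+b \<le> a*v+b" using a0 b0 by (auto intro: mult_left_mono)
    then show "f u \<le> f v" unfolding fq by (simp add: power_mono)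
  qed
  have fpm: "f pm = pm" using g[of pm] by simp
  define seq where "seq n = (f ^^ n) p" for n
  have seqS: "seq (Suc n) = f (seq n)" for n by (simp add: seq_def)
  have bnd: "0 \<le> seq n \<and> seq n \<le> 1/2" for n
  proof (induction n)
    case 0 then show ?case using assms by (simp add: seq_def)
  next
    case (Suc n)
    have "f (seq n) \<le> f (1/2)" using Suc mono by auto
    then show ?case using half by (simp add: seqS fq)
  qed
  have ms: "monoseq seq"
  proof (cases "p \<le> pm")
    case True
    have "seq n \<le> pm \<and> seq n \<le> seq (Suc n)" for n
    proof (induction n)
      case 0
      have "seq 0 \<le> pm" using True by (simp add: seq_def)
      moreover have "\<not> f (seq 0) < seq 0" using neg calculation by force
      ultimately show ?case by (simp add: seqS)
    next
      case (Suc n)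
      have "f (seq n) \<le> f pm" using Suc bnd[of n] mono by auto
      then have "seq (Suc n) \<le> pm" using fpm seqS by simp
      moreover have "\<not> f (seq (Suc n)) < seq (Suc n)" using neg calculation by force
      ultimately show ?case by (simp add: seqS)
    qed
    then show ?thesis unfolding monoseq_Suc by auto
  next
    case False
    have "pm \<le> seq n \<and> seq (Suc n) \<le> seq n" for n
    proof (induction n)
      case 0
      have "pm \<le> seq 0" using False by (simp add: seq_def)
      moreover have "f (seq 0) - seq 0 \<le> 0"
      proof -
        have "seq 0 - pm \<ge> 0" "seq 0 - pp \<le> 0" using calculation bnd[of 0] pph by auto
        then have "(seq 0 - pm)*(seq 0 - pp) \<le> 0" by (simp add: mult_nonneg_nonpos)
        then show ?thesis using g[of "seq 0"] a2
          by (metis mult.assoc mult_nonneg_nonpos less_eq_real_def zero_le_mult_iff zero_le_numeral)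
      qed
      ultimately show ?case by (simp add: seqS)
    next
      case (Suc n)
      have "f pm \<le> f (seq n)" using Suc pm0 mono by auto
      then have c: "pm \<le> seq (Suc n)" using fpm seqS by simp
      moreover have "f (seq (Suc n)) - seq (Suc n) \<le> 0"
      proof -
        have "seq (Suc n) - pm \<ge> 0" "seq (Suc n) - pp \<le> 0" using c bnd[of "Suc n"] pph by auto
        then have "(seq (Suc n) - pm)*(seq (Suc n) - pp) \<le> 0" by (simp add: mult_nonneg_nonpos)
        then show ?thesis using g[of "seq (Suc n)"] a2
          by (metis mult.assoc mult_nonneg_nonpos less_eq_real_def zero_le_mult_iff zero_le_numeral)
      qed
      ultimately show ?case by (simp add: seqS)
    qed
    then show ?thesis unfolding monoseq_Suc by auto
  qed
  have "Bseq seq"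
  proof (rule BseqI'[of _ 1])
    fix n have "0 \<le> seq n" "seq n \<le> 1/2" using bnd[of n] by auto
    then show "norm (seq n) \<le> 1" by simp
  qed
  then have "convergent seq" using ms Bseq_monoseq_convergent by blast
  then obtain L where L: "seq \<longlonglongrightarrow> L" by (auto simp: convergent_def)
  have feq: "f = (\<lambda>q. 2*(a*q+b)^2)" using fq by auto
  have cf: "isCont f L" unfolding feq by (intro continuous_intros)
  have "(\<lambda>n. f (seq n)) \<longlonglongrightarrow> f L"
    by (rule isCont_tendsto_compose[OF cf L])
  moreover have "(\<lambda>n. f (seq n)) \<longlonglongrightarrow> L"
    using L LIMSEQ_Suc[OF L] by (simp add: seqS)
  ultimately have fL: "f L = L" using LIMSEQ_unique by blast
  have L2: "L \<le> 1/2" using L bnd by (intro LIMSEQ_le_const2) auto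
  have "2*a^2*(L - pm)*(L - pp) = 0" using g[of L] fL by simp
  then have "L = pm \<or> L = pp" using a2 by auto
  then have "L = pm" using L2 pph by auto
  moreover have "seq = (\<lambda>n. (iter_map \<epsilon> x ^^ n) p)" by (simp add: seq_def f_def fun_eq_iff)
  ultimately show ?thesis using L pme fp by simp
qed

end
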